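(* Let $G$ be a locally compact abelian group and let $\varphi\in B(G)$ be real-valued and odd (i.e. $\varphi(-x)=-\varphi(x)$ for all $x\in G$). If $\|\varphi\|_{B(G)}\le 1$, then there exists a characteristic function $f$ on $G$ such that $\operatorname{Im} f(x)=\varphi(x)$ for all $x\in G$.
   Context: $\widehat{G}$ denotes the dual group of $G$ (continuous homomorphisms $\gamma:G\to\{z\in\mathbb{C}:|z|=1\}$), written additively, with $(x,\gamma)=\gamma(x)$. $M(\widehat{G})$ is the Banach algebra of bounded regular complex Borel measures on $\widehat{G}$ with the total variation norm. For $\omega\in M(\widehat{G})$, its Fourier–Stieltjes transform is $\widehat{\omega}(x)=\int_{\widehat{G}}\overline{(x,\gamma)}\,d\omega(\gamma)$, $x\in G$. $B(G)=\{\widehat{\omega}:\omega\in M(\widehat{G})\}$ is the Fourier–Stieltjes algebra, normed by $\|\widehat{\omega}\|_{B(G)}=\|\omega\|_{M(\widehat{G})}$. A characteristic function on $G$ is a function of the form $\widehat{\mu}$ with $\mu$ a nonnegative measure in $M(\widehat{G})$ with $\|\mu\|=1$ (equivalently, by Bochner's theorem, a continuous positive definite function $f$ on $G$ with $f(0)=1$). *)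

theory Defs
  imports "HOL-Analysis.Analysis" "HOL-Probability.Probability"
begin

definition dual_group :: "('g::topological_ab_group_add \<Rightarrow> complex) set" where
  "dual_group = {\<gamma>. continuous_on UNIV \<gamma> \<and> (\<forall>x y. \<gamma> (x + y) = \<gamma> x * \<gamma> y) \<and> (\<forall>x. cmod (\<gamma> x) = 1)}"

definition dual_topology :: "('g::topological_ab_group_add \<Rightarrow> complex) topology" where
  "dual_topology = topology_generated_by
     {{\<gamma> \<in> dual_group. \<gamma> ` K \<subseteq> U} | K U. compact K \<and> open U}"

definition dual_borel_measure :: "('g::topological_ab_group_add \<Rightarrow> complex) measure \<Rightarrow> bool" where
  "dual_borel_measure M \<longleftrightarrow> space M = dual_group \<and>
     sets M = sigma_sets dual_group {U. openin dual_topology U}"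

definition dual_regular :: "('g::topological_ab_group_add \<Rightarrow> complex) measure \<Rightarrow> bool" where
  "dual_regular M \<longleftrightarrow> (\<forall>A \<in> sets M.
     emeasure M A = (INF U \<in> {U. openin dual_topology U \<and> A \<subseteq> U}. emeasure M U) \<and>
     emeasure M A = (SUP K \<in> {K. compactin dual_topology K \<and> K \<subseteq> A}. emeasure M K))"

text \<open>Fourier--Stieltjes transform of the complex measure h d|omega| (polar decomposition:
  M = |omega| a finite positive regular Borel measure, |h| = 1).\<close>
definition fourier_stieltjes ::
  "('g::topological_ab_group_add \<Rightarrow> complex) measure \<Rightarrow> (('g \<Rightarrow> complex) \<Rightarrow> complex) \<Rightarrow> 'g \<Rightarrow> complex" where
  "fourier_stieltjes M h x = (LINT \<gamma>|M. cnj (\<gamma> x) * h \<gamma>)"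

definition B_norm_le :: "('g::topological_ab_group_add \<Rightarrow> complex) \<Rightarrow> real \<Rightarrow> bool" where
  "B_norm_le \<phi> c \<longleftrightarrow> (\<exists>M h. dual_borel_measure M \<and> dual_regular M \<and> finite_measure M \<and>
     h \<in> borel_measurable M \<and> (\<forall>\<gamma> \<in> space M. cmod (h \<gamma>) = 1) \<and>
     measure M (space M) \<le> c \<and> (\<forall>x. \<phi> x = fourier_stieltjes M h x))"

definition characteristic_function :: "('g::topological_ab_group_add \<Rightarrow> complex) \<Rightarrow> bool" where
  "characteristic_function f \<longleftrightarrow> (\<exists>\<mu>. dual_borel_measure \<mu> \<and> dual_regular \<mu> \<and>
     emeasure \<mu> (space \<mu>) = 1 \<and> (\<forall>x. f x = fourier_stieltjes \<mu> (\<lambda>_. 1) x))"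

end

theory Submission
  imports Defs
begin

lemma dual_topspace: "topspace (dual_topology :: ('g::topological_ab_group_add \<Rightarrow> complex) topology) = dual_group"
proof -
  have "dual_group \<in> {{\<gamma> \<in> (dual_group :: ('g \<Rightarrow> complex) set). \<gamma> ` K \<subseteq> U} | K U. compact K \<and> open U}"
    by (rule CollectI, rule exI[of _ "{}"], rule exI[of _ UNIV]) auto
  then show ?thesis unfolding dual_topology_def topology_generated_by_topspace by blast
qed

lemma dual_gen_open:
  assumes "compact K" "open U"
  shows "openin (dual_topology :: ('g::topological_ab_group_add \<Rightarrow> complex) topology) {\<gamma> \<in> dual_group. \<gamma> ` K \<subseteq> U}"
  unfolding dual_topology_def using assms by (intro topology_generated_by_Basis) blast

lemma dual_eval_open:
  assumes "open U"
  shows "openin (dual_topology :: ('g::topological_ab_group_add \<Rightarrow> complex) topology) {\<gamma> \<in> dual_group. \<gamma> x \<in> U}"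
  using dual_gen_open[OF compact_sing[of x] assms] by simp

lemma dual_Hausdorff: "Hausdorff_space (dual_topology :: ('g::topological_ab_group_add \<Rightarrow> complex) topology)"
  unfolding Hausdorff_space_def dual_topspace
proof (intro allI impI, elim conjE)
  fix \<gamma>1 \<gamma>2 :: "'g \<Rightarrow> complex"
  assume "\<gamma>1 \<in> dual_group" "\<gamma>2 \<in> dual_group" "\<gamma>1 \<noteq> \<gamma>2"
  then have "\<exists>z. \<gamma>1 z \<noteq> \<gamma>2 z" by (simp add: fun_eq_iff)
  then obtain z where "\<gamma>1 z \<noteq> \<gamma>2 z" by blast
  from hausdorff[OF this] obtain U V where UV: "open U" "open V" "\<gamma>1 z \<in> U" "\<gamma>2 z \<in> V" "U \<inter> V = {}"
    by blast
  define P where "P = {\<gamma> \<in> (dual_group :: ('g \<Rightarrow> complex) set). \<gamma> z \<in> U}"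
  define Q where "Q = {\<gamma> \<in> (dual_group :: ('g \<Rightarrow> complex) set). \<gamma> z \<in> V}"
  have P: "openin dual_topology P" unfolding P_def by (rule dual_eval_open[OF UV(1)])
  have Q: "openin dual_topology Q" unfolding Q_def by (rule dual_eval_open[OF UV(2)])
  have "\<gamma>1 \<in> P" unfolding P_def using UV(3) \<open>\<gamma>1 \<in> dual_group\<close> by simp
  moreover have "\<gamma>2 \<in> Q" unfolding Q_def using UV(4) \<open>\<gamma>2 \<in> dual_group\<close> by simp
  moreover have "disjnt P Q" unfolding disjnt_def P_def Q_def using UV(5) by blast
  ultimately show "\<exists>U V. openin dual_topology U \<and> openin dual_topology V \<and> \<gamma>1 \<in> U \<and> \<gamma>2 \<in> V \<and> disjnt U V"
    using P Q by blast
qed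

definition refl_char :: "('g \<Rightarrow> complex) \<Rightarrow> ('g \<Rightarrow> complex)" where
  "refl_char \<gamma> = (\<lambda>x. cnj (\<gamma> x))"

lemma refl_char_in: "\<gamma> \<in> dual_group \<Longrightarrow> refl_char \<gamma> \<in> dual_group"
  unfolding dual_group_def refl_char_def
  by (auto intro!: continuous_intros)

lemma refl_char_invol[simp]: "refl_char (refl_char \<gamma>) = \<gamma>"
  unfolding refl_char_def by simp

lemma one_char_in: "(\<lambda>_. 1) \<in> dual_group"
  unfolding dual_group_def by auto

lemma refl_char_cont: "continuous_map (dual_topology :: ('g::topological_ab_group_add \<Rightarrow> complex) topology) dual_topology refl_char"
proof -
  define S where "S = {{\<gamma> \<in> (dual_group :: ('g \<Rightarrow> complex) set). \<gamma> ` K \<subseteq> U} | K U. compact K \<and> open U}"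
  have "continuous_map dual_topology (topology_generated_by S) refl_char"
  proof (rule continuous_on_generated_topo)
    fix G assume "G \<in> S"
    then obtain K U where G: "G = {\<gamma> \<in> dual_group. \<gamma> ` K \<subseteq> U}" "compact K" "open U"
      unfolding S_def by blast
    have "open (cnj -` U)"
      using G(3) by (intro open_vimage) (auto intro: continuous_intros)
    have "refl_char -` G \<inter> topspace dual_topology = {\<gamma> \<in> dual_group. \<gamma> ` K \<subseteq> cnj -` U}"
      unfolding G dual_topspace using refl_char_in by (auto simp: refl_char_def)
    then show "openin dual_topology (refl_char -` G \<inter> topspace dual_topology)"
      using dual_gen_open[OF G(2) \<open>open (cnj -` U)\<close>] by simp
  next
    have "\<Union>S = dual_group" using dual_topspace[where 'g='g] unfolding dual_topology_def S_def by simp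
    then show "refl_char ` topspace dual_topology \<subseteq> \<Union> S"
      using refl_char_in by (auto simp: dual_topspace)
  qed
  then show ?thesis unfolding S_def dual_topology_def .
qed

lemma char_zero: "\<gamma> \<in> dual_group \<Longrightarrow> \<gamma> 0 = 1"
proof -
  assume g: "\<gamma> \<in> dual_group"
  have h: "\<gamma> (0 + 0) = \<gamma> 0 * \<gamma> 0" and n: "cmod (\<gamma> 0) = 1" using g unfolding dual_group_def by blast+
  have nz: "\<gamma> 0 \<noteq> 0" using n by auto
  have "\<gamma> 0 * \<gamma> 0 = \<gamma> 0 * 1" using h by simp
  then show ?thesis using nz by simp
qed

lemma char_neg: "\<gamma> \<in> dual_group \<Longrightarrow> \<gamma> (- x) = cnj (\<gamma> x)"
proof -
  assume g: "\<gamma> \<in> dual_group"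
  have h: "\<gamma> (x + - x) = \<gamma> x * \<gamma> (- x)" and n: "cmod (\<gamma> x) = 1" using g unfolding dual_group_def by blast+
  have 1: "\<gamma> x * \<gamma> (- x) = 1" using h char_zero[OF g] by simp
  have 2: "\<gamma> x * cnj (\<gamma> x) = 1" using complex_norm_square[of "\<gamma> x"] n by simp
  have "cnj (\<gamma> x) = cnj (\<gamma> x) * (\<gamma> x * \<gamma> (- x))" using 1 by simp
  also have "\<dots> = (\<gamma> x * cnj (\<gamma> x)) * \<gamma> (- x)" by (simp add: ac_simps)
  also have "\<dots> = \<gamma> (- x)" using 2 by simp
  finally show ?thesis by simp
qed

lemma dual_minus_one_open:
  "openin (dual_topology :: ('g::topological_ab_group_add \<Rightarrow> complex) topology) (dual_group - {\<lambda>_. 1})"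
proof -
  have eq: "dual_group - {\<lambda>_. 1} = \<Union> (range (\<lambda>x. {\<gamma> \<in> (dual_group :: ('g \<Rightarrow> complex) set). \<gamma> x \<in> - {1}}))"
    by auto
  have o: "open (- {1 :: complex})" by (rule open_Compl) simp
  have "openin dual_topology (\<Union> (range (\<lambda>x. {\<gamma> \<in> (dual_group :: ('g \<Rightarrow> complex) set). \<gamma> x \<in> - {1}})))"
  proof (rule openin_Union)
    fix S assume "S \<in> range (\<lambda>x. {\<gamma> \<in> (dual_group :: ('g \<Rightarrow> complex) set). \<gamma> x \<in> - {1}})"
    then obtain x where "S = {\<gamma> \<in> (dual_group :: ('g \<Rightarrow> complex) set). \<gamma> x \<in> - {1}}" by blast
    then show "openin dual_topology S" using dual_eval_open[OF o, of x] by simp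
  qed
  then show ?thesis using eq by simp
qed


definition reg_on :: "'a topology \<Rightarrow> 'a measure \<Rightarrow> bool" where
  "reg_on X N \<longleftrightarrow> (\<forall>A \<in> sets N.
     emeasure N A = (INF U \<in> {U. openin X U \<and> A \<subseteq> U}. emeasure N U) \<and>
     emeasure N A = (SUP K \<in> {K. compactin X K \<and> K \<subseteq> A}. emeasure N K))"

definition eps_reg :: "'a topology \<Rightarrow> 'a measure \<Rightarrow> bool" where
  "eps_reg X N \<longleftrightarrow> (\<forall>A \<in> sets N. \<forall>e>0. \<exists>U K. openin X U \<and> compactin X K \<and> K \<subseteq> A \<and> A \<subseteq> U
      \<and> emeasure N (U - K) < ennreal e)"

definition good :: "'a topology \<Rightarrow> 'a measure \<Rightarrow> bool" where
  "good X N \<longleftrightarrow> Hausdorff_space X \<and> space N = topspace X \<and>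
     sets N = sigma_sets (topspace X) {U. openin X U}"

lemma good_open_sets: "good X N \<Longrightarrow> openin X U \<Longrightarrow> U \<in> sets N"
  unfolding good_def by (auto intro: sigma_sets.Basic)

lemma good_compact_sets: 
  assumes "good X N" "compactin X K" shows "K \<in> sets N"
proof -
  have "closedin X K" using assms compactin_imp_closedin unfolding good_def by blast
  then have "openin X (topspace X - K)" by (simp add: closedin_def)
  then have "topspace X - K \<in> sets N" using good_open_sets[OF assms(1)] by blast
  then have "topspace X - (topspace X - K) \<in> sets N"
    using assms(1) unfolding good_def by (metis sets.compl_sets)
  moreover have "K \<subseteq> topspace X" using assms(2) compactin_subset_topspace by blast
  ultimately show ?thesis by (metis Diff_Diff_Int inf.absorb2)
qed

lemma eps_regD:
  assumes "eps_reg X N" "A \<in> sets N" "0 < e"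
  shows "\<exists>U K. openin X U \<and> compactin X K \<and> K \<subseteq> A \<and> A \<subseteq> U \<and> emeasure N (U - K) < ennreal e"
  using assms unfolding eps_reg_def by simp

lemma eps_to_reg:
  assumes g: "good X N" and fm: "finite_measure N" and er: "eps_reg X N"
  shows "reg_on X N"
  unfolding reg_on_def
proof (intro ballI conjI)
  fix A assume A: "A \<in> sets N"
  show "emeasure N A = (INF U \<in> {U. openin X U \<and> A \<subseteq> U}. emeasure N U)"
  proof (rule antisym)
    show "emeasure N A \<le> (INF U \<in> {U. openin X U \<and> A \<subseteq> U}. emeasure N U)"
    proof (rule INF_greatest)
      fix U assume "U \<in> {U. openin X U \<and> A \<subseteq> U}"
      then have "U \<in> sets N" "A \<subseteq> U" using good_open_sets[OF g] by auto
      then show "emeasure N A \<le> emeasure N U" by (intro emeasure_mono)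
    qed
    show "(INF U \<in> {U. openin X U \<and> A \<subseteq> U}. emeasure N U) \<le> emeasure N A"
    proof (rule ennreal_le_epsilon)
      fix e :: real assume "0 < e"
      then obtain U K where UK: "openin X U" "compactin X K" "K \<subseteq> A" "A \<subseteq> U" "emeasure N (U - K) < ennreal e"
        using eps_regD[OF er A \<open>0 < e\<close>] by blast
      have Us: "U \<in> sets N" "K \<in> sets N" using UK good_open_sets[OF g] good_compact_sets[OF g] by auto
      have "(INF U \<in> {U. openin X U \<and> A \<subseteq> U}. emeasure N U) \<le> emeasure N U"
        using UK by (intro INF_lower) auto
      also have "\<dots> = emeasure N A + emeasure N (U - A)"
      proof -
        have "A \<union> (U - A) = U" using UK(4) by blast
        moreover have "A \<inter> (U - A) = {}" by blast
        moreover have "emeasure N A + emeasure N (U - A) = emeasure N (A \<union> (U - A))"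
          by (rule plus_emeasure[OF A sets.Diff[OF Us(1) A]]) blast
        ultimately have "emeasure N A + emeasure N (U - A) = emeasure N U" by (simp only:)
        then show ?thesis by (rule sym)
      qed
      also have "\<dots> \<le> emeasure N A + emeasure N (U - K)"
        using UK Us A by (intro add_left_mono emeasure_mono) auto
      also have "\<dots> \<le> emeasure N A + ennreal e" using UK by (intro add_left_mono) simp
      finally show "(INF U \<in> {U. openin X U \<and> A \<subseteq> U}. emeasure N U) \<le> emeasure N A + ennreal e" .
    qed
  qed
  show "emeasure N A = (SUP K \<in> {K. compactin X K \<and> K \<subseteq> A}. emeasure N K)"
  proof (rule antisym)
    show "(SUP K \<in> {K. compactin X K \<and> K \<subseteq> A}. emeasure N K) \<le> emeasure N A"
    proof (rule SUP_least)
      fix K assume "K \<in> {K. compactin X K \<and> K \<subseteq> A}"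
      then have "K \<subseteq> A" by auto
      then show "emeasure N K \<le> emeasure N A" using A by (intro emeasure_mono)
    qed
    show "emeasure N A \<le> (SUP K \<in> {K. compactin X K \<and> K \<subseteq> A}. emeasure N K)"
    proof (rule ennreal_le_epsilon)
      fix e :: real assume "0 < e"
      then obtain U K where UK: "openin X U" "compactin X K" "K \<subseteq> A" "A \<subseteq> U" "emeasure N (U - K) < ennreal e"
        using eps_regD[OF er A \<open>0 < e\<close>] by blast
      have Us: "U \<in> sets N" "K \<in> sets N" using UK good_open_sets[OF g] good_compact_sets[OF g] by auto
      have "emeasure N A = emeasure N K + emeasure N (A - K)"
      proof -
        have "K \<union> (A - K) = A" using UK(3) by blast
        moreover have "K \<inter> (A - K) = {}" by blast
        moreover have "emeasure N K + emeasure N (A - K) = emeasure N (K \<union> (A - K))"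
          by (rule plus_emeasure[OF Us(2) sets.Diff[OF A Us(2)]]) blast
        ultimately have "emeasure N K + emeasure N (A - K) = emeasure N A" by (simp only:)
        then show ?thesis by (rule sym)
      qed
      also have "\<dots> \<le> emeasure N K + emeasure N (U - K)"
        using UK Us A by (intro add_left_mono emeasure_mono) auto
      also have "\<dots> \<le> (SUP K \<in> {K. compactin X K \<and> K \<subseteq> A}. emeasure N K) + ennreal e"
        using UK by (intro add_mono SUP_upper) auto
      finally show "emeasure N A \<le> (SUP K \<in> {K. compactin X K \<and> K \<subseteq> A}. emeasure N K) + ennreal e" .
    qed
  qed
qed

lemma reg_to_eps:
  assumes g: "good X N" and fm: "finite_measure N" and r: "reg_on X N"
  shows "eps_reg X N"
  unfolding eps_reg_def
proof (intro ballI allI impI)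
  fix A and e :: real assume A: "A \<in> sets N" and e: "0 < e"
  interpret finite_measure N by (rule fm)
  have Ainf: "emeasure N A = (INF U \<in> {U. openin X U \<and> A \<subseteq> U}. emeasure N U)"
   and Asup: "emeasure N A = (SUP K \<in> {K. compactin X K \<and> K \<subseteq> A}. emeasure N K)"
    using r A unfolding reg_on_def by auto
  have "emeasure N A < ennreal (measure N A + e/2)"
    using e by (simp add: emeasure_eq_measure ennreal_lessI)
  then have "(INF U \<in> {U. openin X U \<and> A \<subseteq> U}. emeasure N U) < ennreal (measure N A + e/2)"
    by (simp only: Ainf[symmetric])
  then obtain U where U: "openin X U" "A \<subseteq> U" "emeasure N U < ennreal (measure N A + e/2)"
    by (metis (no_types, lifting) INF_less_iff mem_Collect_eq)
  have Us: "U \<in> sets N" using U good_open_sets[OF g] by auto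
  have mU: "measure N U < measure N A + e/2"
    using U(3) by (simp add: emeasure_eq_measure ennreal_less_iff)
  obtain K where K: "compactin X K" "K \<subseteq> A" "measure N A - e/2 < measure N K"
  proof (cases "measure N A - e/2 < 0")
    case True
    then show ?thesis using that[of "{}"] by auto
  next
    case False
    have "ennreal (measure N A - e/2) < emeasure N A"
      using False e by (simp add: emeasure_eq_measure ennreal_lessI)
    then have "ennreal (measure N A - e/2) < (SUP K \<in> {K. compactin X K \<and> K \<subseteq> A}. emeasure N K)"
      by (simp only: Asup[symmetric])
    then obtain K where K: "compactin X K" "K \<subseteq> A" "ennreal (measure N A - e/2) < emeasure N K"
      by (metis (no_types, lifting) less_SUP_iff mem_Collect_eq)
    then show ?thesis using that[of K] False
      by (simp add: emeasure_eq_measure ennreal_less_iff)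
  qed
  have Ks: "K \<in> sets N" using K good_compact_sets[OF g] by auto
  have "measure N (U - K) = measure N U - measure N K"
    using K U Us Ks by (intro finite_measure_Diff) auto
  then have "measure N (U - K) < e" using mU K by linarith
  then have "emeasure N (U - K) < ennreal e"
    using Us Ks e by (simp add: emeasure_eq_measure ennreal_lessI)
  then show "\<exists>U K. openin X U \<and> compactin X K \<and> K \<subseteq> A \<and> A \<subseteq> U \<and> emeasure N (U - K) < ennreal e"
    using U K by blast
qed


lemma good_cong: "good X N \<Longrightarrow> sets N' = sets N \<Longrightarrow> good X N'"
  unfolding good_def by (metis sets_eq_imp_space_eq)

lemma eps_density:
  assumes g: "good X N" and er: "eps_reg X N" and f: "f \<in> borel_measurable N" and le: "\<And>x. f x \<le> 1"
  shows "eps_reg X (density N f)"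
  unfolding eps_reg_def
proof (intro ballI allI impI)
  fix A and e :: real assume A: "A \<in> sets (density N f)" and e: "0 < e"
  then have A': "A \<in> sets N" by simp
  obtain U K where UK: "openin X U" "compactin X K" "K \<subseteq> A" "A \<subseteq> U" "emeasure N (U - K) < ennreal e"
    using eps_regD[OF er A' e] by blast
  have s: "U - K \<in> sets N" using UK good_open_sets[OF g] good_compact_sets[OF g] by auto
  have "emeasure (density N f) (U - K) = (\<integral>\<^sup>+ x. f x * indicator (U - K) x \<partial>N)"
    using f s by (rule emeasure_density)
  also have "\<dots> \<le> (\<integral>\<^sup>+ x. indicator (U - K) x \<partial>N)"
    by (intro nn_integral_mono) (simp add: indicator_def le)
  also have "\<dots> = emeasure N (U - K)" using s by simp
  finally show "\<exists>U K. openin X U \<and> compactin X K \<and> K \<subseteq> A \<and> A \<subseteq> U \<and> emeasure (density N f) (U - K) < ennreal e"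
    using UK by (meson order.strict_trans1)
qed

lemma eps_distr:
  assumes g: "good X N" and er: "eps_reg X N" and c: "continuous_map X X R"
    and inv: "\<And>x. x \<in> topspace X \<Longrightarrow> R (R x) = x"
    and m: "R \<in> measurable N N"
  shows "eps_reg X (distr N N R)"
  unfolding eps_reg_def
proof (intro ballI allI impI)
  fix A and e :: real assume A: "A \<in> sets (distr N N R)" and e: "0 < e"
  then have A': "A \<in> sets N" by simp
  have sp: "space N = topspace X" using g unfolding good_def by simp
  have A'': "R -` A \<inter> space N \<in> sets N" using m A' by (rule measurable_sets)
  obtain U K where UK: "openin X U" "compactin X K" "K \<subseteq> R -` A \<inter> space N" "R -` A \<inter> space N \<subseteq> U"
     "emeasure N (U - K) < ennreal e"
    using eps_regD[OF er A'' e] by blast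
  define U' where "U' = {x \<in> topspace X. R x \<in> U}"
  define K' where "K' = R ` K"
  have U': "openin X U'" unfolding U'_def using c UK(1) by (rule openin_continuous_map_preimage)
  have K': "compactin X K'" unfolding K'_def using UK(2) c by (rule image_compactin)
  have Asub: "A \<subseteq> topspace X" using A' sets.sets_into_space sp by blast
  have "K' \<subseteq> A" unfolding K'_def using UK(3) by auto
  moreover have "A \<subseteq> U'" unfolding U'_def
  proof
    fix a assume a: "a \<in> A"
    then have "a \<in> topspace X" using Asub by blast
    moreover have "R a \<in> topspace X" using continuous_map_image_subset_topspace[OF c] \<open>a \<in> topspace X\<close> by blast
    ultimately have "R a \<in> R -` A \<inter> space N" using inv[OF \<open>a \<in> topspace X\<close>] a sp by simp
    then show "a \<in> {x \<in> topspace X. R x \<in> U}" using UK(4) \<open>a \<in> topspace X\<close> by auto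
  qed
  moreover have "emeasure (distr N N R) (U' - K') < ennreal e"
  proof -
    have s: "U' - K' \<in> sets N" using U' K' good_open_sets[OF g] good_compact_sets[OF g] by auto
    have "emeasure (distr N N R) (U' - K') = emeasure N (R -` (U' - K') \<inter> space N)"
      using m s by (intro emeasure_distr) auto
    also have "\<dots> \<le> emeasure N (U - K)"
    proof (intro emeasure_mono)
      show "R -` (U' - K') \<inter> space N \<subseteq> U - K"
      proof
        fix x assume x: "x \<in> R -` (U' - K') \<inter> space N"
        then have "R (R x) \<in> U" "x \<in> topspace X" unfolding U'_def using sp by auto
        then have "x \<in> U" using inv by simp
        moreover have "x \<notin> K" using x unfolding K'_def by auto
        ultimately show "x \<in> U - K" by simp
      qed
      show "U - K \<in> sets N" using UK good_open_sets[OF g] good_compact_sets[OF g] by auto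
    qed
    finally show ?thesis using UK(5) by (meson order.strict_trans1)
  qed
  ultimately show "\<exists>U K. openin X U \<and> compactin X K \<and> K \<subseteq> A \<and> A \<subseteq> U \<and> emeasure (distr N N R) (U - K) < ennreal e"
    using U' K' by blast
qed

lemma emeasure_density_return_out:
  assumes B: "B \<in> sets N" and nB: "p \<notin> B"
  shows "emeasure (density (return N p) (\<lambda>_. c)) B = 0"
proof -
  have B': "B \<in> sets (return N p)" using B by simp
  show ?thesis using nB by (simp add: emeasure_density_const[OF B'] emeasure_return[OF B])
qed

lemma eps_dirac:
  assumes g: "good X N" and p: "p \<in> topspace X"
  shows "eps_reg X (density (return N p) (\<lambda>_. c))"
  unfolding eps_reg_def
proof (intro ballI allI impI)
  fix A and e :: real assume A: "A \<in> sets (density (return N p) (\<lambda>_. c))" and e: "0 < e"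
  then have A': "A \<in> sets N" by simp
  have sp: "space N = topspace X" using g unfolding good_def by simp
  have Asub: "A \<subseteq> topspace X" using A' sets.sets_into_space sp by blast
  have H: "Hausdorff_space X" using g unfolding good_def by simp
  have o: "openin X (topspace X - {p})"
    using t1_space_openin_delete_alt[THEN iffD1, OF Hausdorff_imp_t1_space[OF H]] openin_topspace by blast
  have os: "topspace X - {p} \<in> sets N" using good_open_sets[OF g o] .
  have z: "emeasure (density (return N p) (\<lambda>_. c)) (topspace X - {p}) = 0"
    using os by (rule emeasure_density_return_out) simp
  have ez: "0 < ennreal e" using e by simp
  show "\<exists>U K. openin X U \<and> compactin X K \<and> K \<subseteq> A \<and> A \<subseteq> U \<and> emeasure (density (return N p) (\<lambda>_. c)) (U - K) < ennreal e"
  proof (cases "p \<in> A")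
    case True
    have "openin X (topspace X)" by simp
    moreover have "compactin X {p}" using p by simp
    moreover have "{p} \<subseteq> A" using True by simp
    moreover have "emeasure (density (return N p) (\<lambda>_. c)) (topspace X - {p}) < ennreal e" using z ez by simp
    ultimately show ?thesis using Asub by blast
  next
    case False
    have "compactin X {}" by simp
    moreover have "A \<subseteq> topspace X - {p}" using False Asub by blast
    moreover have "emeasure (density (return N p) (\<lambda>_. c)) (topspace X - {p} - {}) < ennreal e" using z ez by simp
    ultimately show ?thesis using o by blast
  qed
qed

lemma bind_facts:
  fixes Nf :: "nat \<Rightarrow> 'a measure"
  assumes I: "finite I" "I \<noteq> {}" and s: "\<And>i. i \<in> I \<Longrightarrow> sets (Nf i) = sets B"
    and sp: "\<And>i. i \<in> I \<Longrightarrow> subprob_space (Nf i)"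
  shows "sets (count_space I \<bind> Nf) = sets B"
    and "\<And>A. A \<in> sets B \<Longrightarrow> emeasure (count_space I \<bind> Nf) A = (\<Sum>i\<in>I. emeasure (Nf i) A)"
    and "\<And>f :: 'a \<Rightarrow> real. f \<in> borel_measurable B \<Longrightarrow> (\<And>x. x \<in> space B \<Longrightarrow> \<bar>f x\<bar> \<le> C) \<Longrightarrow>
           integral\<^sup>L (count_space I \<bind> Nf) f = (\<Sum>i\<in>I. integral\<^sup>L (Nf i) f)"
    and "finite_measure (count_space I \<bind> Nf)"
proof -
  have meas: "Nf \<in> measurable (count_space I) (subprob_algebra B)"
  proof (rule measurable_count_space_eq1[THEN iffD2], rule Pi_I)
    fix i assume i: "i \<in> I"
    show "Nf i \<in> space (subprob_algebra B)" using s[OF i] sp[OF i] by (simp add: space_subprob_algebra)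
  qed
  show S: "sets (count_space I \<bind> Nf) = sets B" by (rule sets_bind) (use s I in auto)
  show E: "emeasure (count_space I \<bind> Nf) A = (\<Sum>i\<in>I. emeasure (Nf i) A)" if "A \<in> sets B" for A
    by (subst emeasure_bind[OF _ meas that]) (use I in \<open>simp_all add: nn_integral_count_space_finite\<close>)
  have fin: "emeasure (Nf i) A < top" if "i \<in> I" for i A
    using subprob_space.emeasure_subprob_space_less_top[OF sp[OF that]] by (simp add: less_top)
  show F: "finite_measure (count_space I \<bind> Nf)"
  proof (rule finite_measureI)
    have "space (count_space I \<bind> Nf) \<in> sets B" using S by (metis sets.top)
    then have "emeasure (count_space I \<bind> Nf) (space (count_space I \<bind> Nf)) = 
       (\<Sum>i\<in>I. emeasure (Nf i) (space (count_space I \<bind> Nf)))" by (rule E)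
    also have "\<dots> < top" using fin I(1) by simp
    finally show "emeasure (count_space I \<bind> Nf) (space (count_space I \<bind> Nf)) \<noteq> \<infinity>"
      by simp
  qed
  show "integral\<^sup>L (count_space I \<bind> Nf) f = (\<Sum>i\<in>I. integral\<^sup>L (Nf i) f)"
    if f: "f \<in> borel_measurable B" and b: "\<And>x. x \<in> space B \<Longrightarrow> \<bar>f x\<bar> \<le> C" for f :: "'a \<Rightarrow> real"
  proof -
    have int: "integrable M f" if "finite_measure M" "sets M = sets B" for M
    proof -
      interpret finite_measure M by fact
      have "f \<in> borel_measurable M" by (subst measurable_cong_sets[OF \<open>sets M = sets B\<close> refl]) (rule f)
      moreover have "AE x in M. norm (f x) \<le> C"
        using b sets_eq_imp_space_eq[OF \<open>sets M = sets B\<close>] by (intro AE_I2) simp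
      ultimately show ?thesis by (intro integrable_const_bound[where B=C])
    qed
    have fm: "finite_measure (Nf i)" if "i \<in> I" for i
      using sp[OF that] by (simp add: subprob_space_def)
    have fp: "(\<lambda>x. ennreal (f x)) \<in> borel_measurable B" "(\<lambda>x. ennreal (- f x)) \<in> borel_measurable B"
      by (rule measurable_compose[OF f measurable_ennreal], rule measurable_compose[OF borel_measurable_uminus[OF f] measurable_ennreal])
    have nb: "(\<integral>\<^sup>+x. g x \<partial>(count_space I \<bind> Nf)) = (\<Sum>i\<in>I. \<integral>\<^sup>+x. g x \<partial>Nf i)"
      if "g \<in> borel_measurable B" for g
      by (subst nn_integral_bind[OF that meas]) (rule nn_integral_count_space_finite[OF I(1)])
    have fin2: "(\<integral>\<^sup>+x. g x \<partial>Nf i) < top" if "i \<in> I" "\<And>x. x \<in> space B \<Longrightarrow> g x \<le> ennreal C" for i g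
    proof -
      interpret finite_measure "Nf i" using fm that by simp
      have "(\<integral>\<^sup>+x. g x \<partial>Nf i) \<le> (\<integral>\<^sup>+x. ennreal C \<partial>Nf i)" using that(2) sets_eq_imp_space_eq[OF s[OF that(1)]] by (intro nn_integral_mono) simp
      also have "\<dots> < top" by (simp add: ennreal_mult_eq_top_iff less_top[symmetric])
      finally show ?thesis .
    qed
    have b1a: "ennreal (f x) \<le> ennreal C" if "x \<in> space B" for x
      using b[OF that] by (intro ennreal_leI) (simp add: abs_le_iff)
    have b1b: "ennreal (- f x) \<le> ennreal C" if "x \<in> space B" for x
      using b[OF that] by (intro ennreal_leI) (simp add: abs_le_iff)
    have "integral\<^sup>L (count_space I \<bind> Nf) f =
        enn2real (\<integral>\<^sup>+x. f x \<partial>(count_space I \<bind> Nf)) - enn2real (\<integral>\<^sup>+x. ennreal (- f x) \<partial>(count_space I \<bind> Nf))"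
      using int[OF F S] by (rule real_lebesgue_integral_def)
    also have "\<dots> = enn2real (\<Sum>i\<in>I. \<integral>\<^sup>+x. f x \<partial>Nf i) - enn2real (\<Sum>i\<in>I. \<integral>\<^sup>+x. ennreal (- f x) \<partial>Nf i)"
      by (simp only: nb[OF fp(1)] nb[OF fp(2)])
    also have "\<dots> = (\<Sum>i\<in>I. enn2real (\<integral>\<^sup>+x. f x \<partial>Nf i)) - (\<Sum>i\<in>I. enn2real (\<integral>\<^sup>+x. ennreal (- f x) \<partial>Nf i))"
      using fin2[OF _ b1a] fin2[OF _ b1b] by (simp add: enn2real_sum o_def)
    also have "\<dots> = (\<Sum>i\<in>I. enn2real (\<integral>\<^sup>+x. f x \<partial>Nf i) - enn2real (\<integral>\<^sup>+x. ennreal (- f x) \<partial>Nf i))"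
      by (rule sum_subtractf[symmetric])
    also have "\<dots> = (\<Sum>i\<in>I. integral\<^sup>L (Nf i) f)"
    proof (rule sum.cong[OF refl])
      fix i assume i: "i \<in> I"
      show "enn2real (\<integral>\<^sup>+x. f x \<partial>Nf i) - enn2real (\<integral>\<^sup>+x. ennreal (- f x) \<partial>Nf i) = integral\<^sup>L (Nf i) f"
        by (rule real_lebesgue_integral_def[OF int[OF fm[OF i] s[OF i]], symmetric])
    qed
    finally show ?thesis .
  qed
qed


lemma eps_bind:
  fixes Nf :: "nat \<Rightarrow> 'a measure"
  assumes I: "finite I" "I \<noteq> {}" and g: "good X B" and s: "\<And>i. i \<in> I \<Longrightarrow> sets (Nf i) = sets B"
    and sp: "\<And>i. i \<in> I \<Longrightarrow> subprob_space (Nf i)" and er: "\<And>i. i \<in> I \<Longrightarrow> eps_reg X (Nf i)"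
  shows "eps_reg X (count_space I \<bind> Nf)"
  unfolding eps_reg_def
proof (intro ballI allI impI)
  fix A and e :: real assume A: "A \<in> sets (count_space I \<bind> Nf)" and e: "0 < e"
  have S: "sets (count_space I \<bind> Nf) = sets B" by (rule bind_facts(1)[OF I s sp])
  have E: "\<And>A. A \<in> sets B \<Longrightarrow> emeasure (count_space I \<bind> Nf) A = (\<Sum>i\<in>I. emeasure (Nf i) A)"
    by (rule bind_facts(2)[OF I s sp])
  have fm: "finite_measure (Nf i)" if "i \<in> I" for i using sp[OF that] by (simp add: subprob_space_def)
  define n where "n = card I"
  have n: "0 < n" using I by (simp add: n_def card_gt_0_iff)
  define e' where "e' = e / n"
  have e': "0 < e'" using e n by (simp add: e'_def)
  have ne: "of_nat n * e' = e" using n by (simp add: e'_def)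
  have "\<forall>i\<in>I. \<exists>UK. openin X (fst UK) \<and> compactin X (snd UK) \<and> snd UK \<subseteq> A \<and> A \<subseteq> fst UK \<and> emeasure (Nf i) (fst UK - snd UK) < ennreal e'"
  proof
    fix i assume i: "i \<in> I"
    have "A \<in> sets (Nf i)" using A S s[OF i] by simp
    from eps_regD[OF er[OF i] this e'] obtain U K where
      "openin X U \<and> compactin X K \<and> K \<subseteq> A \<and> A \<subseteq> U \<and> emeasure (Nf i) (U - K) < ennreal e'" by blast
    then show "\<exists>UK. openin X (fst UK) \<and> compactin X (snd UK) \<and> snd UK \<subseteq> A \<and> A \<subseteq> fst UK \<and> emeasure (Nf i) (fst UK - snd UK) < ennreal e'"
      by (intro exI[of _ "(U, K)"]) simp
  qed
  from bchoice[OF this] obtain F where F: "\<forall>i\<in>I. openin X (fst (F i)) \<and> compactin X (snd (F i)) \<and> snd (F i) \<subseteq> A \<and> A \<subseteq> fst (F i) \<and> emeasure (Nf i) (fst (F i) - snd (F i)) < ennreal e'"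
    by blast
  define U where "U = (\<Inter>i\<in>I. fst (F i))"
  define K where "K = (\<Union>i\<in>I. snd (F i))"
  have U: "openin X U" unfolding U_def using F I by (intro openin_INT2) auto
  have K: "compactin X K" unfolding K_def using F I by (intro compactin_Union) auto
  have KA: "K \<subseteq> A" using F by (auto simp: K_def)
  have AU: "A \<subseteq> U" using F by (auto simp: U_def)
  have UKs: "U - K \<in> sets B" using good_open_sets[OF g U] good_compact_sets[OF g K] by auto
  have "emeasure (count_space I \<bind> Nf) (U - K) = (\<Sum>i\<in>I. emeasure (Nf i) (U - K))" by (rule E[OF UKs])
  also have "\<dots> = (\<Sum>i\<in>I. ennreal (measure (Nf i) (U - K)))"
    by (rule sum.cong[OF refl]) (simp add: finite_measure.emeasure_eq_measure[OF fm])
  also have "\<dots> = ennreal (\<Sum>i\<in>I. measure (Nf i) (U - K))" by (rule sum_ennreal) simp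
  also have "\<dots> < ennreal e"
  proof (rule ennreal_lessI[OF e])
    have "measure (Nf i) (U - K) < e'" if i: "i \<in> I" for i
    proof -
      have Fi: "openin X (fst (F i))" "compactin X (snd (F i))" "emeasure (Nf i) (fst (F i) - snd (F i)) < ennreal e'"
        using F i by auto
      have s1: "fst (F i) - snd (F i) \<in> sets (Nf i)"
        using good_open_sets[OF g Fi(1)] good_compact_sets[OF g Fi(2)] s[OF i] by auto
      have sub: "U - K \<subseteq> fst (F i) - snd (F i)" using i by (auto simp: U_def K_def)
      have "measure (Nf i) (U - K) \<le> measure (Nf i) (fst (F i) - snd (F i))"
        by (rule finite_measure.finite_measure_mono[OF fm[OF i] sub s1])
      also have "\<dots> < e'"
        using Fi(3) by (simp add: finite_measure.emeasure_eq_measure[OF fm[OF i]] ennreal_less_iff)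
      finally show ?thesis .
    qed
    then have "(\<Sum>i\<in>I. measure (Nf i) (U - K)) < (\<Sum>i\<in>I. e')"
      using I by (intro sum_strict_mono) auto
    also have "\<dots> = e" using ne by (simp add: n_def)
    finally show "(\<Sum>i\<in>I. measure (Nf i) (U - K)) < e" .
  qed
  finally show "\<exists>U K. openin X U \<and> compactin X K \<and> K \<subseteq> A \<and> A \<subseteq> U \<and> emeasure (count_space I \<bind> Nf) (U - K) < ennreal e"
    using U K KA AU by blast
qed


lemma ev_meas:
  fixes M :: "('g::topological_ab_group_add \<Rightarrow> complex) measure" and x :: 'g
  assumes s: "sets N = sets M" and b: "dual_borel_measure M"
  shows "(\<lambda>\<gamma>. \<gamma> x) \<in> borel_measurable N"
proof (rule borel_measurableI)
  fix S :: "complex set" assume S: "open S"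
  have spM: "space M = dual_group" and setsM: "sets M = sigma_sets dual_group {U. openin dual_topology U}"
    using b unfolding dual_borel_measure_def by simp_all
  have sp: "space N = dual_group" using sets_eq_imp_space_eq[OF s] spM by simp
  have eq: "(\<lambda>\<gamma>. \<gamma> x) -` S \<inter> space N = {\<gamma> \<in> dual_group. \<gamma> x \<in> S}" unfolding sp by blast
  have o: "openin dual_topology {\<gamma> \<in> (dual_group :: ('g \<Rightarrow> complex) set). \<gamma> x \<in> S}" by (rule dual_eval_open[OF S])
  have "{\<gamma> \<in> (dual_group :: ('g \<Rightarrow> complex) set). \<gamma> x \<in> S} \<in> sigma_sets dual_group {U. openin dual_topology U}"
    by (rule sigma_sets.Basic) (simp add: o)
  then show "(\<lambda>\<gamma>. \<gamma> x) -` S \<inter> space N \<in> sets N" unfolding eq s setsM .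
qed

lemma refl_meas:
  fixes M :: "('g::topological_ab_group_add \<Rightarrow> complex) measure"
  assumes b: "dual_borel_measure M"
  shows "refl_char \<in> measurable M M"
proof -
  have spM: "space M = dual_group" and setsM: "sets M = sigma_sets dual_group {U. openin dual_topology U}"
    using b unfolding dual_borel_measure_def by simp_all
  show ?thesis
  proof (rule measurable_sigma_sets[OF setsM])
    show "{U. openin dual_topology U} \<subseteq> Pow (dual_group :: ('g \<Rightarrow> complex) set)"
    proof
      fix U :: "('g \<Rightarrow> complex) set" assume "U \<in> {U. openin dual_topology U}"
      then have "U \<subseteq> topspace dual_topology" by (simp add: openin_subset)
      then show "U \<in> Pow dual_group" by (simp add: dual_topspace)
    qed
    show "refl_char \<in> space M \<rightarrow> dual_group" unfolding spM by (rule Pi_I) (rule refl_char_in)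
    fix y :: "('g \<Rightarrow> complex) set" assume "y \<in> {U. openin dual_topology U}"
    then have y: "openin dual_topology y" by simp
    have "openin dual_topology {x \<in> topspace dual_topology. refl_char x \<in> y}"
      by (rule openin_continuous_map_preimage[OF refl_char_cont y])
    moreover have "{x \<in> topspace dual_topology. refl_char x \<in> y} = refl_char -` y \<inter> space M"
      unfolding spM dual_topspace by blast
    ultimately have "openin dual_topology (refl_char -` y \<inter> space M)" by simp
    then have "refl_char -` y \<inter> space M \<in> sigma_sets dual_group {U. openin dual_topology U}"
      by (intro sigma_sets.Basic) simp
    then show "refl_char -` y \<inter> space M \<in> sets M" unfolding setsM .
  qed
qed

theorem theorem1:
  fixes \<phi> :: "'g::{topological_ab_group_add, t2_space} \<Rightarrow> real"
  assumes "locally_compact_space (euclidean :: 'g topology)"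
    and "\<forall>x. \<phi> (- x) = - \<phi> x"
    and "B_norm_le (\<lambda>x. complex_of_real (\<phi> x)) 1"
  shows "\<exists>f :: 'g \<Rightarrow> complex. characteristic_function f \<and> (\<forall>x. Im (f x) = \<phi> x)"
proof -
  from assms(3) obtain M h where Mb: "dual_borel_measure M" and Mr: "dual_regular M" and Mf: "finite_measure M"
    and hm: "h \<in> borel_measurable M" and h1: "\<forall>\<gamma> \<in> space M. cmod (h \<gamma>) = 1"
    and Mm: "measure M (space M) \<le> 1" and Mphi: "\<forall>x. complex_of_real (\<phi> x) = fourier_stieltjes M h x"
    unfolding B_norm_le_def by blast
  interpret Mf: finite_measure M by (rule Mf)
  have spM: "space M = dual_group" and setsM: "sets M = sigma_sets dual_group {U. openin dual_topology U}"
    using Mb unfolding dual_borel_measure_def by auto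
  have gM: "good dual_topology M" unfolding good_def using dual_Hausdorff[where 'g='g] dual_topspace[where 'g='g] spM setsM by simp
  have regM: "reg_on dual_topology M" using Mr unfolding reg_on_def dual_regular_def .
  have epsM: "eps_reg dual_topology M" by (rule reg_to_eps[OF gM Mf regM])
  define m where "m = measure M (space M)"
  have m0: "0 \<le> m" "m \<le> 1" using Mm by (auto simp: m_def)
  define s where "s \<gamma> = max (-1) (min 1 (Im (h \<gamma>)))" for \<gamma>
  have s_eq: "s \<gamma> = Im (h \<gamma>)" if "\<gamma> \<in> space M" for \<gamma>
  proof -
    have "\<bar>Im (h \<gamma>)\<bar> \<le> 1" using abs_Im_le_cmod[of "h \<gamma>"] h1 that by simp
    then show ?thesis unfolding s_def by (simp add: abs_le_iff)
  qed
  have sm: "s \<in> borel_measurable M"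
  proof -
    note hm[measurable]
    show ?thesis unfolding s_def by measurable
  qed
  define ar where "ar \<gamma> = (1 - s \<gamma>) / 2" for \<gamma>
  define br where "br \<gamma> = (1 + s \<gamma>) / 2" for \<gamma>
  have ar01: "0 \<le> ar \<gamma>" "ar \<gamma> \<le> 1" for \<gamma> unfolding ar_def s_def by auto
  have br01: "0 \<le> br \<gamma>" "br \<gamma> \<le> 1" for \<gamma> unfolding br_def s_def by auto
  have arm: "ar \<in> borel_measurable M" unfolding ar_def using sm by measurable
  have brm: "br \<in> borel_measurable M" unfolding br_def using sm by measurable
  have arint: "integrable M ar" using arm ar01 by (intro Mf.integrable_const_bound[where B=1]) auto
  have brint: "integrable M br" using brm br01 by (intro Mf.integrable_const_bound[where B=1]) auto
  define one :: "'g \<Rightarrow> complex" where "one = (\<lambda>_. 1)"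
  have one_in: "one \<in> space M" using one_char_in spM by (simp add: one_def)
  define N0 where "N0 = density M (\<lambda>\<gamma>. ennreal (ar \<gamma>))"
  define N1 where "N1 = distr (density M (\<lambda>\<gamma>. ennreal (br \<gamma>))) M refl_char"
  define N2 where "N2 = density (return M one) (\<lambda>_. ennreal (1 - m))"
  define Nf where "Nf i = (if i = 0 then N0 else if i = (1::nat) then N1 else N2)" for i
  define I where "I = {0, 1, 2::nat}"
  define \<mu> where "\<mu> = count_space I \<bind> Nf"
  have I: "finite I" "I \<noteq> {}" unfolding I_def by auto
  have Rm: "refl_char \<in> measurable M M" by (rule refl_meas[OF Mb])
  have Rm': "refl_char \<in> measurable (density M (\<lambda>\<gamma>. ennreal (br \<gamma>))) M"
    by (subst measurable_cong_sets[OF sets_density refl]) (rule Rm)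
  have sN: "sets (Nf i) = sets M" for i unfolding Nf_def N0_def N1_def N2_def by simp
  have spN: "space (Nf i) = space M" for i by (rule sets_eq_imp_space_eq[OF sN])
  have dens_mass: "emeasure (density M (\<lambda>\<gamma>. ennreal (g \<gamma>))) (space M) = ennreal (integral\<^sup>L M g)"
    if gm: "g \<in> borel_measurable M" and gi: "integrable M g" and g0: "\<And>\<gamma>. 0 \<le> g \<gamma>" for g
  proof -
    have "emeasure (density M (\<lambda>\<gamma>. ennreal (g \<gamma>))) (space M) = (\<integral>\<^sup>+ x. ennreal (g x) * indicator (space M) x \<partial>M)"
      using gm by (intro emeasure_density) auto
    also have "\<dots> = (\<integral>\<^sup>+ x. ennreal (g x) \<partial>M)"
      by (rule nn_integral_cong) simp
    also have "\<dots> = ennreal (integral\<^sup>L M g)"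
      using gi g0 by (intro nn_integral_eq_integral) auto
    finally show ?thesis .
  qed
  have e0: "emeasure N0 (space M) = ennreal (integral\<^sup>L M ar)"
    unfolding N0_def by (rule dens_mass[OF arm arint ar01(1)])
  have e1: "emeasure N1 (space M) = ennreal (integral\<^sup>L M br)"
  proof -
    have "emeasure N1 (space M) = emeasure (density M (\<lambda>\<gamma>. ennreal (br \<gamma>))) (refl_char -` space M \<inter> space (density M (\<lambda>\<gamma>. ennreal (br \<gamma>))))"
      unfolding N1_def by (rule emeasure_distr[OF Rm']) simp
    also have "refl_char -` space M \<inter> space (density M (\<lambda>\<gamma>. ennreal (br \<gamma>))) = space M"
      using spM refl_char_in by auto
    finally show ?thesis using dens_mass[OF brm brint br01(1)] by simp
  qed
  have e2: "emeasure N2 (space M) = ennreal (1 - m)"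
  proof -
    have "space M \<in> sets (return M one)" by simp
    then have "emeasure N2 (space M) = ennreal (1 - m) * emeasure (return M one) (space M)"
      unfolding N2_def by (rule emeasure_density_const)
    also have "emeasure (return M one) (space M) = 1" using one_in by (simp add: emeasure_return)
    finally show ?thesis by simp
  qed
  have sumab: "integral\<^sup>L M ar + integral\<^sup>L M br = m"
  proof -
    have "integral\<^sup>L M ar + integral\<^sup>L M br = integral\<^sup>L M (\<lambda>\<gamma>. ar \<gamma> + br \<gamma>)"
      using arint brint by simp
    also have "(\<lambda>\<gamma>. ar \<gamma> + br \<gamma>) = (\<lambda>_. 1)" unfolding ar_def br_def by (auto simp: field_simps)
    finally show ?thesis by (simp add: m_def)
  qed
  have ia0: "0 \<le> integral\<^sup>L M ar" using ar01 by (simp add: integral_nonneg)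
  have ib0: "0 \<le> integral\<^sup>L M br" using br01 by (simp add: integral_nonneg)
  have sub: "subprob_space (Nf i)" if "i \<in> I" for i
  proof (rule subprob_spaceI)
    show "space (Nf i) \<noteq> {}" using one_in spN by auto
    have "emeasure (Nf i) (space M) \<le> 1"
    proof -
      have "i = 0 \<or> i = 1 \<or> i = 2" using that by (auto simp: I_def)
      moreover have "ennreal (integral\<^sup>L M ar) \<le> 1" using sumab ib0 m0 by (simp add: ennreal_le_1)
      moreover have "ennreal (integral\<^sup>L M br) \<le> 1" using sumab ia0 m0 by (simp add: ennreal_le_1)
      moreover have "ennreal (1 - m) \<le> 1" using m0 by (simp add: ennreal_le_1)
      ultimately show ?thesis unfolding Nf_def using e0 e1 e2 by auto
    qed
    then show "emeasure (Nf i) (space (Nf i)) \<le> 1" using spN by simp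
  qed
  note BF = bind_facts[OF I, of Nf M, OF sN sub]
  have sets\<mu>: "sets \<mu> = sets M" unfolding \<mu>_def by (rule BF(1))
  have sp\<mu>: "space \<mu> = space M" by (rule sets_eq_imp_space_eq[OF sets\<mu>])
  have fm\<mu>: "finite_measure \<mu>" unfolding \<mu>_def by (rule BF(4))
  have mass: "emeasure \<mu> (space \<mu>) = 1"
  proof -
    have "emeasure \<mu> (space \<mu>) = emeasure \<mu> (space M)" using sp\<mu> by simp
    also have "\<dots> = (\<Sum>i\<in>I. emeasure (Nf i) (space M))"
      unfolding \<mu>_def by (rule BF(2)[OF _ sets.top]) simp
    also have "\<dots> = emeasure N0 (space M) + (emeasure N1 (space M) + emeasure N2 (space M))"
      by (simp add: I_def Nf_def)
    also have "\<dots> = ennreal (integral\<^sup>L M ar + (integral\<^sup>L M br + (1 - m)))"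
      using ia0 ib0 m0 by (simp add: e0 e1 e2 ennreal_plus)
    also have "integral\<^sup>L M ar + (integral\<^sup>L M br + (1 - m)) = 1" using sumab by simp
    finally show ?thesis by simp
  qed
  have g\<mu>: "dual_borel_measure \<mu>" unfolding dual_borel_measure_def using sp\<mu> sets\<mu> spM setsM by simp
  have eps\<mu>: "eps_reg dual_topology \<mu>"
    unfolding \<mu>_def
  proof (rule eps_bind[OF I gM sN sub])
    fix i assume "i \<in> I"
    have e0': "eps_reg dual_topology N0" unfolding N0_def
      by (rule eps_density[OF gM epsM]) (use arm ar01 in auto)
    have gD: "good dual_topology (density M (\<lambda>\<gamma>. ennreal (br \<gamma>)))" by (rule good_cong[OF gM]) simp
    have eD: "eps_reg dual_topology (density M (\<lambda>\<gamma>. ennreal (br \<gamma>)))"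
      by (rule eps_density[OF gM epsM]) (use brm br01 in auto)
    have e1': "eps_reg dual_topology N1"
    proof -
      have "eps_reg dual_topology (distr (density M (\<lambda>\<gamma>. ennreal (br \<gamma>))) (density M (\<lambda>\<gamma>. ennreal (br \<gamma>))) refl_char)"
      proof (rule eps_distr[OF gD eD refl_char_cont])
        show "\<And>x. refl_char (refl_char x) = x" by simp
        show "refl_char \<in> measurable (density M (\<lambda>\<gamma>. ennreal (br \<gamma>))) (density M (\<lambda>\<gamma>. ennreal (br \<gamma>)))"
          by (subst measurable_cong_sets[OF sets_density sets_density]) (rule Rm)
      qed
      moreover have "distr (density M (\<lambda>\<gamma>. ennreal (br \<gamma>))) (density M (\<lambda>\<gamma>. ennreal (br \<gamma>))) refl_char = N1"
        unfolding N1_def by (rule distr_cong) auto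
      ultimately show ?thesis by simp
    qed
    have e2': "eps_reg dual_topology N2" unfolding N2_def
      by (rule eps_dirac[OF gM]) (use one_in spM dual_topspace[where 'g='g] in simp)
    show "eps_reg dual_topology (Nf i)" unfolding Nf_def using e0' e1' e2' by simp
  qed
  have reg\<mu>: "dual_regular \<mu>"
  proof -
    have "good dual_topology \<mu>" by (rule good_cong[OF gM sets\<mu>])
    then have "reg_on dual_topology \<mu>" by (rule eps_to_reg[OF _ fm\<mu> eps\<mu>])
    then show ?thesis unfolding reg_on_def dual_regular_def .
  qed
  define f where "f x = fourier_stieltjes \<mu> (\<lambda>_. 1) x" for x
  have cf: "characteristic_function f"
    unfolding characteristic_function_def f_def using g\<mu> reg\<mu> mass by blast
  have "Im (f x) = \<phi> x" for x
  proof -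
    interpret M\<mu>: finite_measure \<mu> by (rule fm\<mu>)
    have evm: "(\<lambda>\<gamma>. \<gamma> x) \<in> borel_measurable \<mu>" "(\<lambda>\<gamma>. \<gamma> x) \<in> borel_measurable M"
      using ev_meas[OF sets\<mu> Mb] ev_meas[OF refl Mb] by auto
    have norm1: "cmod (\<gamma> y) = 1" if "\<gamma> \<in> dual_group" for \<gamma> :: "'g \<Rightarrow> complex" and y :: 'g using that unfolding dual_group_def by auto
    have int1: "integrable \<mu> (\<lambda>\<gamma>. cnj (\<gamma> x) * 1)"
    proof (rule M\<mu>.integrable_const_bound[where B=1])
      show "AE \<gamma> in \<mu>. norm (cnj (\<gamma> x) * 1) \<le> 1" using sp\<mu> spM norm1 by (intro AE_I2) simp
      show "(\<lambda>\<gamma>. cnj (\<gamma> x) * 1) \<in> borel_measurable \<mu>"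
        using measurable_compose[OF evm(1) borel_measurable_continuous_onI[OF continuous_on_cnj[OF continuous_on_id]]] by simp
    qed
    define g where "g \<gamma> = - Im (\<gamma> x)" for \<gamma> :: "'g \<Rightarrow> complex"
    have gm: "g \<in> borel_measurable M" unfolding g_def using evm(2) by measurable
    have gb: "\<bar>g \<gamma>\<bar> \<le> 1" if "\<gamma> \<in> space M" for \<gamma>
      using abs_Im_le_cmod[of "\<gamma> x"] norm1[of \<gamma> x] that spM by (simp add: g_def)
    have "Im (f x) = integral\<^sup>L \<mu> (\<lambda>\<gamma>. Im (cnj (\<gamma> x) * 1))"
      unfolding f_def fourier_stieltjes_def using int1 by simp
    also have "\<dots> = integral\<^sup>L \<mu> g" unfolding g_def by simp
    also have "\<dots> = (\<Sum>i\<in>I. integral\<^sup>L (Nf i) g)" unfolding \<mu>_def by (rule BF(3)[OF _ gm gb]) simp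
    also have "\<dots> = integral\<^sup>L N0 g + (integral\<^sup>L N1 g + integral\<^sup>L N2 g)"
      by (simp add: I_def Nf_def)
    also have "integral\<^sup>L N0 g = integral\<^sup>L M (\<lambda>\<gamma>. ar \<gamma> * g \<gamma>)"
      unfolding N0_def using gm arm ar01 by (subst integral_density) auto
    also have "integral\<^sup>L N1 g = integral\<^sup>L M (\<lambda>\<gamma>. br \<gamma> * - g \<gamma>)"
    proof -
      have "integral\<^sup>L N1 g = integral\<^sup>L (density M (\<lambda>\<gamma>. ennreal (br \<gamma>))) (\<lambda>\<gamma>. g (refl_char \<gamma>))"
        unfolding N1_def using Rm' gm by (intro integral_distr) auto
      also have "\<dots> = integral\<^sup>L M (\<lambda>\<gamma>. br \<gamma> * g (refl_char \<gamma>))"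
      proof -
        have "(\<lambda>\<gamma>. g (refl_char \<gamma>)) \<in> borel_measurable M" using measurable_comp[OF Rm gm] by (simp add: comp_def)
        then show ?thesis using brm br01 by (subst integral_density) auto
      qed
      also have "\<dots> = integral\<^sup>L M (\<lambda>\<gamma>. br \<gamma> * - g \<gamma>)"
        by (simp add: g_def refl_char_def)
      finally show ?thesis .
    qed
    also have "integral\<^sup>L N2 g = 0"
    proof -
      have "integral\<^sup>L N2 g = integral\<^sup>L (return M one) (\<lambda>\<gamma>. (1 - m) * g \<gamma>)"
        unfolding N2_def using gm m0 by (subst integral_density) (auto simp: measurable_cong_sets[OF sets_return refl])
      also have "\<dots> = (1 - m) * g one"
        using one_in gm by (subst integral_return) auto
      also have "g one = 0" by (simp add: g_def one_def)
      finally show ?thesis by simp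
    qed
    also have "integral\<^sup>L M (\<lambda>\<gamma>. ar \<gamma> * g \<gamma>) + (integral\<^sup>L M (\<lambda>\<gamma>. br \<gamma> * - g \<gamma>) + 0)
        = integral\<^sup>L M (\<lambda>\<gamma>. ar \<gamma> * g \<gamma> + br \<gamma> * - g \<gamma>)"
    proof -
      have i1: "integrable M (\<lambda>\<gamma>. ar \<gamma> * g \<gamma>)"
      proof (rule Mf.integrable_const_bound[where B=1])
        show "AE \<gamma> in M. norm (ar \<gamma> * g \<gamma>) \<le> 1"
        proof (rule AE_I2)
          fix \<gamma> assume "\<gamma> \<in> space M"
          then have "\<bar>g \<gamma>\<bar> \<le> 1" by (rule gb)
          then have "ar \<gamma> * \<bar>g \<gamma>\<bar> \<le> 1 * 1" using ar01 by (intro mult_mono) auto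
          then show "norm (ar \<gamma> * g \<gamma>) \<le> 1" using ar01 by (simp add: abs_mult)
        qed
        show "(\<lambda>\<gamma>. ar \<gamma> * g \<gamma>) \<in> borel_measurable M" using arm gm by measurable
      qed
      have i2: "integrable M (\<lambda>\<gamma>. br \<gamma> * - g \<gamma>)"
      proof (rule Mf.integrable_const_bound[where B=1])
        show "AE \<gamma> in M. norm (br \<gamma> * - g \<gamma>) \<le> 1"
        proof (rule AE_I2)
          fix \<gamma> assume "\<gamma> \<in> space M"
          then have "\<bar>g \<gamma>\<bar> \<le> 1" by (rule gb)
          then have "br \<gamma> * \<bar>g \<gamma>\<bar> \<le> 1 * 1" using br01 by (intro mult_mono) auto
          then show "norm (br \<gamma> * - g \<gamma>) \<le> 1" using br01 by (simp add: abs_mult)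
        qed
        show "(\<lambda>\<gamma>. br \<gamma> * - g \<gamma>) \<in> borel_measurable M" using brm gm by measurable
      qed
      show ?thesis using i1 i2 by simp
    qed
    also have "\<dots> = integral\<^sup>L M (\<lambda>\<gamma>. Im (\<gamma> x) * Im (h \<gamma>))"
      by (rule Bochner_Integration.integral_cong[OF refl]) (simp add: ar_def br_def g_def s_eq field_simps)
    also have "\<dots> = \<phi> x"
    proof -
      have hint: "integrable M (\<lambda>\<gamma>. cnj (\<gamma> y) * h \<gamma>)" for y
      proof (rule Mf.integrable_const_bound[where B=1])
        show "AE \<gamma> in M. norm (cnj (\<gamma> y) * h \<gamma>) \<le> 1" using spM norm1 h1 by (intro AE_I2) (simp add: norm_mult)
        show "(\<lambda>\<gamma>. cnj (\<gamma> y) * h \<gamma>) \<in> borel_measurable M"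
          using measurable_compose[OF ev_meas[OF refl Mb] borel_measurable_continuous_onI[OF continuous_on_cnj[OF continuous_on_id]]] hm
          by (intro borel_measurable_times) simp_all
      qed
      have phiy: "\<phi> y = integral\<^sup>L M (\<lambda>\<gamma>. Re (cnj (\<gamma> y) * h \<gamma>))" for y
      proof -
        have "\<phi> y = Re (complex_of_real (\<phi> y))" by simp
        also have "\<dots> = Re (fourier_stieltjes M h y)" using Mphi by simp
        also have "\<dots> = integral\<^sup>L M (\<lambda>\<gamma>. Re (cnj (\<gamma> y) * h \<gamma>))"
          unfolding fourier_stieltjes_def by (rule integral_Re[OF hint[of y], symmetric])
        finally show ?thesis .
      qed
      have "2 * \<phi> x = \<phi> x - \<phi> (- x)" using assms(2) by simp
      also have "\<dots> = integral\<^sup>L M (\<lambda>\<gamma>. Re (cnj (\<gamma> x) * h \<gamma>) - Re (cnj (\<gamma> (- x)) * h \<gamma>))"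
      proof -
        have r1: "integrable M (\<lambda>\<gamma>. Re (cnj (\<gamma> x) * h \<gamma>))" by (rule integrable_Re[OF hint[of x]])
        have r2: "integrable M (\<lambda>\<gamma>. Re (cnj (\<gamma> (- x)) * h \<gamma>))" by (rule integrable_Re[OF hint[of "- x"]])
        have "\<phi> x - \<phi> (- x) = integral\<^sup>L M (\<lambda>\<gamma>. Re (cnj (\<gamma> x) * h \<gamma>)) - integral\<^sup>L M (\<lambda>\<gamma>. Re (cnj (\<gamma> (- x)) * h \<gamma>))"
          using phiy[of x] phiy[of "- x"] by (rule arg_cong2[where f = minus])
        also have "\<dots> = integral\<^sup>L M (\<lambda>\<gamma>. Re (cnj (\<gamma> x) * h \<gamma>) - Re (cnj (\<gamma> (- x)) * h \<gamma>))"
          by (rule Bochner_Integration.integral_diff[OF r1 r2, symmetric])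
        finally show ?thesis .
      qed
      also have "\<dots> = integral\<^sup>L M (\<lambda>\<gamma>. 2 * (Im (\<gamma> x) * Im (h \<gamma>)))"
        by (rule Bochner_Integration.integral_cong[OF refl]) (simp add: char_neg spM)
      also have "\<dots> = 2 * integral\<^sup>L M (\<lambda>\<gamma>. Im (\<gamma> x) * Im (h \<gamma>))" by simp
      finally show ?thesis by simp
    qed
    finally show ?thesis .
  qed
  then show ?thesis using cf by blast
qed

end
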